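(* Let $\mathcal{C}$ be a peircean bicategory. For every arrow $c:X\to Y$, $(\neg c)^\dagger=\neg(c^\dagger)$.
   Context: Composition in diagrammatic order. A cartesian bicategory is a poset-enriched symmetric monoidal category with, for each $X$, commutative comonoid $(\mathrm{copy}_X,\mathrm{disc}_X)$ and monoid $(\mathrm{cocopy}_X,\mathrm{codisc}_X)$ forming special Frobenius bimonoids, comonoid left adjoint to monoid, every arrow $c$ satisfying $c;\mathrm{copy}\le\mathrm{copy};(c\otimes c)$ and $c;\mathrm{disc}\le\mathrm{disc}$, with standard coherence. A map is an arrow $f$ with $f;\mathrm{copy}=\mathrm{copy};(f\otimes f)$ and $f;\mathrm{disc}=\mathrm{disc}$. A peircean bicategory is a cartesian bicategory whose homsets carry Boolean algebras (with the given order) such that $f;\neg c=\neg(f;c)$ for every map $f:X\to Y$ and arrow $c:Y\to Z$. The converse of $c:X\to Y$ is $c^\dagger=(\mathrm{id}_Y\otimes(\mathrm{codisc}_X;\mathrm{copy}_X));(\mathrm{id}_Y\otimes c\otimes\mathrm{id}_X);((\mathrm{cocopy}_Y;\mathrm{disc}_Y)\otimes\mathrm{id}_X):Y\to X$. *)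

theory Defs
  imports Main
begin

text \<open>Composition is diagrammatic: seq C f g = f ; g (first f, then g).
  The symmetric monoidal structure is taken to be strict.\<close>

record ('o, 'a) pbicat =
  arr    :: "'a \<Rightarrow> bool"
  dom    :: "'a \<Rightarrow> 'o"
  cod    :: "'a \<Rightarrow> 'o"
  seq    :: "'a \<Rightarrow> 'a \<Rightarrow> 'a"
  idt    :: "'o \<Rightarrow> 'a"
  otim   :: "'o \<Rightarrow> 'o \<Rightarrow> 'o"
  unito  :: "'o"
  tens   :: "'a \<Rightarrow> 'a \<Rightarrow> 'a"
  sym    :: "'o \<Rightarrow> 'o \<Rightarrow> 'a"
  le     :: "'a \<Rightarrow> 'a \<Rightarrow> bool"
  meet   :: "'a \<Rightarrow> 'a \<Rightarrow> 'a"
  join   :: "'a \<Rightarrow> 'a \<Rightarrow> 'a"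
  top    :: "'o \<Rightarrow> 'o \<Rightarrow> 'a"
  bot    :: "'o \<Rightarrow> 'o \<Rightarrow> 'a"
  neg    :: "'a \<Rightarrow> 'a"
  copy   :: "'o \<Rightarrow> 'a"
  disc   :: "'o \<Rightarrow> 'a"
  cocopy :: "'o \<Rightarrow> 'a"
  codisc :: "'o \<Rightarrow> 'a"

definition hom :: "('o, 'a, 'z) pbicat_scheme \<Rightarrow> 'o \<Rightarrow> 'o \<Rightarrow> 'a set" where
  "hom C X Y = {c. arr C c \<and> dom C c = X \<and> cod C c = Y}"

definition category :: "('o, 'a, 'z) pbicat_scheme \<Rightarrow> bool" where
  "category C \<longleftrightarrow>
     (\<forall>X. idt C X \<in> hom C X X)
   \<and> (\<forall>f g. arr C f \<and> arr C g \<and> cod C f = dom C g \<longrightarrow>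
        seq C f g \<in> hom C (dom C f) (cod C g))
   \<and> (\<forall>f. arr C f \<longrightarrow> seq C (idt C (dom C f)) f = f \<and> seq C f (idt C (cod C f)) = f)
   \<and> (\<forall>f g h. arr C f \<and> arr C g \<and> arr C h \<and> cod C f = dom C g \<and> cod C g = dom C h \<longrightarrow>
        seq C (seq C f g) h = seq C f (seq C g h))"

definition strict_symmetric_monoidal :: "('o, 'a, 'z) pbicat_scheme \<Rightarrow> bool" where
  "strict_symmetric_monoidal C \<longleftrightarrow>
     category C
   \<and> (\<forall>X Y Z. otim C X (otim C Y Z) = otim C (otim C X Y) Z)
   \<and> (\<forall>X. otim C (unito C) X = X \<and> otim C X (unito C) = X)
   \<and> (\<forall>f g. arr C f \<and> arr C g \<longrightarrow>
        tens C f g \<in> hom C (otim C (dom C f) (dom C g)) (otim C (cod C f) (cod C g)))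
   \<and> (\<forall>X Y. tens C (idt C X) (idt C Y) = idt C (otim C X Y))
   \<and> (\<forall>f g h k. arr C f \<and> arr C g \<and> arr C h \<and> arr C k \<and> cod C f = dom C g \<and> cod C h = dom C k
        \<longrightarrow> tens C (seq C f g) (seq C h k) = seq C (tens C f h) (tens C g k))
   \<and> (\<forall>f g h. arr C f \<and> arr C g \<and> arr C h \<longrightarrow> tens C (tens C f g) h = tens C f (tens C g h))
   \<and> (\<forall>f. arr C f \<longrightarrow> tens C (idt C (unito C)) f = f \<and> tens C f (idt C (unito C)) = f)
   \<and> (\<forall>X Y. sym C X Y \<in> hom C (otim C X Y) (otim C Y X))
   \<and> (\<forall>f g. arr C f \<and> arr C g \<longrightarrow>
        seq C (tens C f g) (sym C (cod C f) (cod C g)) = seq C (sym C (dom C f) (dom C g)) (tens C g f))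
   \<and> (\<forall>X Y. seq C (sym C X Y) (sym C Y X) = idt C (otim C X Y))
   \<and> (\<forall>X Y Z. sym C X (otim C Y Z) =
        seq C (tens C (sym C X Y) (idt C Z)) (tens C (idt C Y) (sym C X Z)))"

definition poset_enriched :: "('o, 'a, 'z) pbicat_scheme \<Rightarrow> bool" where
  "poset_enriched C \<longleftrightarrow>
     (\<forall>f g. le C f g \<longrightarrow> arr C f \<and> arr C g \<and> dom C f = dom C g \<and> cod C f = cod C g)
   \<and> (\<forall>f. arr C f \<longrightarrow> le C f f)
   \<and> (\<forall>f g. le C f g \<and> le C g f \<longrightarrow> f = g)
   \<and> (\<forall>f g h. le C f g \<and> le C g h \<longrightarrow> le C f h)
   \<and> (\<forall>f f' g g'. le C f f' \<and> le C g g' \<and> cod C f = dom C g \<longrightarrow> le C (seq C f g) (seq C f' g'))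
   \<and> (\<forall>f f' g g'. le C f f' \<and> le C g g' \<longrightarrow> le C (tens C f g) (tens C f' g'))"

definition cartesian_bicategory :: "('o, 'a, 'z) pbicat_scheme \<Rightarrow> bool" where
  "cartesian_bicategory C \<longleftrightarrow>
     strict_symmetric_monoidal C \<and> poset_enriched C
   \<and> (\<forall>X. copy C X \<in> hom C X (otim C X X) \<and> disc C X \<in> hom C X (unito C)
        \<and> cocopy C X \<in> hom C (otim C X X) X \<and> codisc C X \<in> hom C (unito C) X)
   \<comment> \<open>commutative comonoid\<close>
   \<and> (\<forall>X. seq C (copy C X) (tens C (copy C X) (idt C X)) = seq C (copy C X) (tens C (idt C X) (copy C X))
        \<and> seq C (copy C X) (tens C (disc C X) (idt C X)) = idt C X
        \<and> seq C (copy C X) (tens C (idt C X) (disc C X)) = idt C X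
        \<and> seq C (copy C X) (sym C X X) = copy C X)
   \<comment> \<open>commutative monoid\<close>
   \<and> (\<forall>X. seq C (tens C (cocopy C X) (idt C X)) (cocopy C X) = seq C (tens C (idt C X) (cocopy C X)) (cocopy C X)
        \<and> seq C (tens C (codisc C X) (idt C X)) (cocopy C X) = idt C X
        \<and> seq C (tens C (idt C X) (codisc C X)) (cocopy C X) = idt C X
        \<and> seq C (sym C X X) (cocopy C X) = cocopy C X)
   \<comment> \<open>special Frobenius\<close>
   \<and> (\<forall>X. seq C (tens C (copy C X) (idt C X)) (tens C (idt C X) (cocopy C X)) = seq C (cocopy C X) (copy C X)
        \<and> seq C (tens C (idt C X) (copy C X)) (tens C (cocopy C X) (idt C X)) = seq C (cocopy C X) (copy C X)
        \<and> seq C (copy C X) (cocopy C X) = idt C X)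
   \<comment> \<open>comonoid left adjoint to monoid\<close>
   \<and> (\<forall>X. le C (idt C X) (seq C (copy C X) (cocopy C X))
        \<and> le C (seq C (cocopy C X) (copy C X)) (idt C (otim C X X))
        \<and> le C (idt C X) (seq C (disc C X) (codisc C X))
        \<and> le C (seq C (codisc C X) (disc C X)) (idt C (unito C)))
   \<comment> \<open>every arrow is a lax comonoid morphism\<close>
   \<and> (\<forall>c. arr C c \<longrightarrow>
        le C (seq C c (copy C (cod C c))) (seq C (copy C (dom C c)) (tens C c c))
      \<and> le C (seq C c (disc C (cod C c))) (disc C (dom C c)))
   \<comment> \<open>coherence with the monoidal structure\<close>
   \<and> (\<forall>X Y. copy C (otim C X Y) =
          seq C (tens C (copy C X) (copy C Y)) (tens C (tens C (idt C X) (sym C X Y)) (idt C Y))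
        \<and> disc C (otim C X Y) = tens C (disc C X) (disc C Y)
        \<and> cocopy C (otim C X Y) =
          seq C (tens C (tens C (idt C X) (sym C Y X)) (idt C Y)) (tens C (cocopy C X) (cocopy C Y))
        \<and> codisc C (otim C X Y) = tens C (codisc C X) (codisc C Y))
   \<and> copy C (unito C) = idt C (unito C) \<and> disc C (unito C) = idt C (unito C)
   \<and> cocopy C (unito C) = idt C (unito C) \<and> codisc C (unito C) = idt C (unito C)"

definition boolean_homs :: "('o, 'a, 'z) pbicat_scheme \<Rightarrow> bool" where
  "boolean_homs C \<longleftrightarrow> (\<forall>X Y.
       top C X Y \<in> hom C X Y \<and> bot C X Y \<in> hom C X Y
     \<and> (\<forall>h\<in>hom C X Y. le C h (top C X Y) \<and> le C (bot C X Y) h)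
     \<and> (\<forall>f\<in>hom C X Y. \<forall>g\<in>hom C X Y.
          meet C f g \<in> hom C X Y \<and> join C f g \<in> hom C X Y
        \<and> le C (meet C f g) f \<and> le C (meet C f g) g
        \<and> le C f (join C f g) \<and> le C g (join C f g)
        \<and> (\<forall>h\<in>hom C X Y. le C h f \<and> le C h g \<longrightarrow> le C h (meet C f g))
        \<and> (\<forall>h\<in>hom C X Y. le C f h \<and> le C g h \<longrightarrow> le C (join C f g) h)
        \<and> (\<forall>h\<in>hom C X Y. meet C f (join C g h) = join C (meet C f g) (meet C f h)))
     \<and> (\<forall>f\<in>hom C X Y. neg C f \<in> hom C X Y
        \<and> meet C f (neg C f) = bot C X Y \<and> join C f (neg C f) = top C X Y))"

definition is_map :: "('o, 'a, 'z) pbicat_scheme \<Rightarrow> 'a \<Rightarrow> bool" where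
  "is_map C f \<longleftrightarrow> arr C f
     \<and> seq C f (copy C (cod C f)) = seq C (copy C (dom C f)) (tens C f f)
     \<and> seq C f (disc C (cod C f)) = disc C (dom C f)"

definition peircean_bicategory :: "('o, 'a, 'z) pbicat_scheme \<Rightarrow> bool" where
  "peircean_bicategory C \<longleftrightarrow> cartesian_bicategory C \<and> boolean_homs C
     \<and> (\<forall>f c. is_map C f \<and> arr C c \<and> cod C f = dom C c \<longrightarrow>
           seq C f (neg C c) = neg C (seq C f c))"

definition conv :: "('o, 'a, 'z) pbicat_scheme \<Rightarrow> 'a \<Rightarrow> 'a" where
  "conv C c = (let X = dom C c; Y = cod C c in
     seq C (seq C (tens C (idt C Y) (seq C (codisc C X) (copy C X)))
                  (tens C (tens C (idt C Y) c) (idt C X)))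
           (tens C (seq C (cocopy C Y) (disc C Y)) (idt C X)))"

end

theory Submission
  imports Defs
begin

definition eta :: "('o, 'a, 'z) pbicat_scheme \<Rightarrow> 'o \<Rightarrow> 'a" where
  "eta C X = seq C (codisc C X) (copy C X)"
definition eps :: "('o, 'a, 'z) pbicat_scheme \<Rightarrow> 'o \<Rightarrow> 'a" where
  "eps C X = seq C (cocopy C X) (disc C X)"
definition conv2 :: "('o, 'a, 'z) pbicat_scheme \<Rightarrow> 'a \<Rightarrow> 'a" where
  "conv2 C e = seq C (tens C (eta C (dom C e)) (idt C (cod C e)))
     (seq C (tens C (idt C (dom C e)) (tens C e (idt C (cod C e))))
            (tens C (idt C (dom C e)) (eps C (cod C e))))"

locale CB = fixes C :: "('o, 'a, 'z) pbicat_scheme" assumes cb: "cartesian_bicategory C"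
begin

lemma ssm: "strict_symmetric_monoidal C" using cb unfolding cartesian_bicategory_def by blast
lemma cat: "category C" using ssm unfolding strict_symmetric_monoidal_def by blast
lemma pe: "poset_enriched C" using cb unfolding cartesian_bicategory_def by blast

lemma idt_arr[simp]: "arr C (idt C X)" "dom C (idt C X) = X" "cod C (idt C X) = X"
  using cat unfolding category_def hom_def by auto

lemma seq_arr[simp]:
  assumes "arr C f" "arr C g" "cod C f = dom C g"
  shows "arr C (seq C f g)" "dom C (seq C f g) = dom C f" "cod C (seq C f g) = cod C g"
  using cat assms unfolding category_def hom_def by auto

lemma seq_idl[simp]: "arr C f \<Longrightarrow> dom C f = X \<Longrightarrow> seq C (idt C X) f = f"
  using cat unfolding category_def by auto
lemma seq_idr[simp]: "arr C f \<Longrightarrow> cod C f = X \<Longrightarrow> seq C f (idt C X) = f"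
  using cat unfolding category_def by auto
lemma seq_assoc[simp]: "arr C f \<Longrightarrow> arr C g \<Longrightarrow> arr C h \<Longrightarrow> cod C f = dom C g \<Longrightarrow> cod C g = dom C h
  \<Longrightarrow> seq C (seq C f g) h = seq C f (seq C g h)"
  using cat unfolding category_def by auto

lemma tens_arr[simp]:
  assumes "arr C f" "arr C g"
  shows "arr C (tens C f g)" "dom C (tens C f g) = otim C (dom C f) (dom C g)"
    "cod C (tens C f g) = otim C (cod C f) (cod C g)"
  using ssm assms unfolding strict_symmetric_monoidal_def hom_def by auto

lemma otim_assoc[simp]: "otim C (otim C X Y) Z = otim C X (otim C Y Z)"
  using ssm unfolding strict_symmetric_monoidal_def by auto
lemma otim_unit[simp]: "otim C (unito C) X = X" "otim C X (unito C) = X"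
  using ssm unfolding strict_symmetric_monoidal_def by auto
lemma idt_otim[simp]: "idt C (otim C X Y) = tens C (idt C X) (idt C Y)"
  using ssm unfolding strict_symmetric_monoidal_def by auto
lemma tens_assoc[simp]: "arr C f \<Longrightarrow> arr C g \<Longrightarrow> arr C h \<Longrightarrow> tens C (tens C f g) h = tens C f (tens C g h)"
  using ssm unfolding strict_symmetric_monoidal_def by auto
lemma tens_unit[simp]: "arr C f \<Longrightarrow> tens C (idt C (unito C)) f = f" "arr C f \<Longrightarrow> tens C f (idt C (unito C)) = f"
  using ssm unfolding strict_symmetric_monoidal_def by auto
lemma interchange: "arr C f \<Longrightarrow> arr C g \<Longrightarrow> arr C h \<Longrightarrow> arr C k \<Longrightarrow> cod C f = dom C g \<Longrightarrow> cod C h = dom C k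
        \<Longrightarrow> tens C (seq C f g) (seq C h k) = seq C (tens C f h) (tens C g k)"
  using ssm unfolding strict_symmetric_monoidal_def by blast

lemma struct_arr[simp]:
  "arr C (copy C X)" "dom C (copy C X) = X" "cod C (copy C X) = otim C X X"
  "arr C (disc C X)" "dom C (disc C X) = X" "cod C (disc C X) = unito C"
  "arr C (cocopy C X)" "dom C (cocopy C X) = otim C X X" "cod C (cocopy C X) = X"
  "arr C (codisc C X)" "dom C (codisc C X) = unito C" "cod C (codisc C X) = X"
  using cb unfolding cartesian_bicategory_def hom_def by auto

lemma eta_arr[simp]: "arr C (eta C X)" "dom C (eta C X) = unito C" "cod C (eta C X) = otim C X X"
  unfolding eta_def by auto
lemma eps_arr[simp]: "arr C (eps C X)" "dom C (eps C X) = otim C X X" "cod C (eps C X) = unito C"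
  unfolding eps_def by auto

lemma tens_split1: "arr C f \<Longrightarrow> arr C g \<Longrightarrow>
   tens C f g = seq C (tens C f (idt C (dom C g))) (tens C (idt C (cod C f)) g)"
  using interchange[of f "idt C (cod C f)" "idt C (dom C g)" g] by simp
lemma tens_split2: "arr C f \<Longrightarrow> arr C g \<Longrightarrow>
   tens C f g = seq C (tens C (idt C (dom C f)) g) (tens C f (idt C (cod C g)))"
  using interchange[of "idt C (dom C f)" f g "idt C (cod C g)"] by simp

lemma slide: "arr C f \<Longrightarrow> arr C g \<Longrightarrow>
   seq C (tens C f (idt C (dom C g))) (tens C (idt C (cod C f)) g) =
   seq C (tens C (idt C (dom C f)) g) (tens C f (idt C (cod C g)))"
  using tens_split1 tens_split2 by metis

lemma whiskl: "arr C f \<Longrightarrow> arr C g \<Longrightarrow> cod C f = dom C g \<Longrightarrow>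
  seq C (tens C (idt C W) f) (tens C (idt C W) g) = tens C (idt C W) (seq C f g)"
  using interchange[of "idt C W" "idt C W" f g] by simp

lemma whiskr: "arr C f \<Longrightarrow> arr C g \<Longrightarrow> cod C f = dom C g \<Longrightarrow>
  seq C (tens C f (idt C W)) (tens C g (idt C W)) = tens C (seq C f g) (idt C W)"
  using interchange[of f g "idt C W" "idt C W"] by simp

lemma frob:
  "seq C (tens C (copy C X) (idt C X)) (tens C (idt C X) (cocopy C X)) = seq C (cocopy C X) (copy C X)"
  "seq C (tens C (idt C X) (copy C X)) (tens C (cocopy C X) (idt C X)) = seq C (cocopy C X) (copy C X)"
  "seq C (copy C X) (tens C (disc C X) (idt C X)) = idt C X"
  "seq C (copy C X) (tens C (idt C X) (disc C X)) = idt C X"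
  "seq C (tens C (codisc C X) (idt C X)) (cocopy C X) = idt C X"
  "seq C (tens C (idt C X) (codisc C X)) (cocopy C X) = idt C X"
  using cb unfolding cartesian_bicategory_def by auto


lemma snake1: "seq C (tens C (idt C X) (eta C X)) (tens C (eps C X) (idt C X)) = idt C X"
proof -
  have a: "tens C (idt C X) (eta C X) = seq C (tens C (idt C X) (codisc C X)) (tens C (idt C X) (copy C X))"
    unfolding eta_def by (simp add: whiskl)
  have b: "tens C (eps C X) (idt C X) = seq C (tens C (cocopy C X) (idt C X)) (tens C (disc C X) (idt C X))"
    unfolding eps_def by (simp add: whiskr)
  have "seq C (tens C (idt C X) (eta C X)) (tens C (eps C X) (idt C X)) =
     seq C (tens C (idt C X) (codisc C X)) (seq C (seq C (tens C (idt C X) (copy C X)) (tens C (cocopy C X) (idt C X))) (tens C (disc C X) (idt C X)))"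
    unfolding a b by simp
  also have "\<dots> = seq C (seq C (tens C (idt C X) (codisc C X)) (cocopy C X)) (seq C (copy C X) (tens C (disc C X) (idt C X)))"
    unfolding frob(2) by simp
  also have "\<dots> = idt C X" unfolding frob by simp
  finally show ?thesis .
qed

lemma snake2: "seq C (tens C (eta C X) (idt C X)) (tens C (idt C X) (eps C X)) = idt C X"
proof -
  have a: "tens C (eta C X) (idt C X) = seq C (tens C (codisc C X) (idt C X)) (tens C (copy C X) (idt C X))"
    unfolding eta_def by (simp add: whiskr)
  have b: "tens C (idt C X) (eps C X) = seq C (tens C (idt C X) (cocopy C X)) (tens C (idt C X) (disc C X))"
    unfolding eps_def by (simp add: whiskl)
  have "seq C (tens C (eta C X) (idt C X)) (tens C (idt C X) (eps C X)) =
     seq C (tens C (codisc C X) (idt C X)) (seq C (seq C (tens C (copy C X) (idt C X)) (tens C (idt C X) (cocopy C X))) (tens C (idt C X) (disc C X)))"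
    unfolding a b by simp
  also have "\<dots> = seq C (seq C (tens C (codisc C X) (idt C X)) (cocopy C X)) (seq C (copy C X) (tens C (idt C X) (disc C X)))"
    unfolding frob(1) by simp
  also have "\<dots> = idt C X" unfolding frob by simp
  finally show ?thesis .
qed


lemma seq_re: assumes e: "seq C f g = seq C f' g'" and "arr C f" "arr C g" "arr C f'" "arr C g'"
  "cod C f = dom C g" "cod C f' = dom C g'" "arr C h" "cod C g = dom C h"
  shows "seq C f (seq C g h) = seq C f' (seq C g' h)"
proof -
  have "cod C g' = cod C g" using e assms by (metis seq_arr(3))
  then show ?thesis using assms by (metis seq_assoc)
qed

lemma seq_re_id: assumes e: "seq C f g = idt C Z" and "arr C f" "arr C g"
  "cod C f = dom C g" "arr C h" "cod C g = dom C h"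
  shows "seq C f (seq C g h) = h"
proof -
  have "cod C g = Z" using e assms by (metis seq_arr(3) idt_arr(3))
  then show ?thesis using assms by (metis seq_assoc seq_idl)
qed

lemma conv_alt: "arr C c \<Longrightarrow> conv C c =
  seq C (tens C (idt C (cod C c)) (eta C (dom C c)))
   (seq C (tens C (idt C (cod C c)) (tens C c (idt C (dom C c))))
     (tens C (eps C (cod C c)) (idt C (dom C c))))"
  unfolding conv_def Let_def eta_def[symmetric] eps_def[symmetric] by simp

lemma conv_arr: "arr C c \<Longrightarrow> arr C (conv C c) \<and> dom C (conv C c) = cod C c \<and> cod C (conv C c) = dom C c"
  by (simp add: conv_alt)
lemma conv2_arr: "arr C c \<Longrightarrow> arr C (conv2 C c) \<and> dom C (conv2 C c) = cod C c \<and> cod C (conv2 C c) = dom C c"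
  by (simp add: conv2_def)

lemma conv2_conv: assumes c: "arr C c" shows "conv2 C (conv C c) = c"
proof -
  define X where "X = dom C c"
  define Y where "Y = cod C c"
  define d where "d = conv C c"
  have d: "arr C d" "dom C d = Y" "cod C d = X" using conv_arr[OF c] unfolding d_def X_def Y_def by auto
  have cX: "dom C c = X" "cod C c = Y" unfolding X_def Y_def by auto
  note dd = conv_alt[OF c, folded d_def, unfolded cX]
  have s0: "conv2 C d = seq C (tens C (eta C Y) (idt C X))
    (seq C (tens C (idt C Y) (tens C (idt C Y) (tens C (eta C X) (idt C X))))
    (seq C (tens C (idt C Y) (tens C (idt C Y) (tens C c (tens C (idt C X) (idt C X)))))
    (seq C (tens C (idt C Y) (tens C (eps C Y) (tens C (idt C X) (idt C X))))
      (tens C (idt C Y) (eps C X)))))"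
    unfolding conv2_def d dd using c cX by (simp add: whiskl[symmetric] whiskr[symmetric])
  have sb: "seq C (tens C (idt C Y) (tens C (eps C Y) (tens C (idt C X) (idt C X)))) (tens C (idt C Y) (eps C X))
     = seq C (tens C (idt C Y) (tens C (idt C Y) (tens C (idt C Y) (eps C X)))) (tens C (idt C Y) (eps C Y))"
  proof -
    have "seq C (tens C (eps C Y) (tens C (idt C X) (idt C X))) (eps C X) = seq C (tens C (idt C Y) (tens C (idt C Y) (eps C X))) (eps C Y)"
      using slide[of "eps C Y" "eps C X"] by simp
    then show ?thesis by (simp add: whiskl)
  qed
  have sc: "seq C (tens C (idt C Y) (tens C (idt C Y) (tens C c (tens C (idt C X) (idt C X))))) (tens C (idt C Y) (tens C (idt C Y) (tens C (idt C Y) (eps C X))))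
     = seq C (tens C (idt C Y) (tens C (idt C Y) (tens C (idt C X) (eps C X)))) (tens C (idt C Y) (tens C (idt C Y) c))"
  proof -
    have "seq C (tens C c (tens C (idt C X) (idt C X))) (tens C (idt C Y) (eps C X)) = seq C (tens C (idt C X) (eps C X)) c"
      using slide[of c "eps C X"] c cX by simp
    then show ?thesis using whiskl[of "tens C c (tens C (idt C X) (idt C X))" "tens C (idt C Y) (eps C X)" "otim C Y Y"]
      whiskl[of "tens C (idt C X) (eps C X)" c "otim C Y Y"] c cX by simp
  qed
  have sd: "seq C (tens C (idt C Y) (tens C (idt C Y) (tens C (eta C X) (idt C X)))) (tens C (idt C Y) (tens C (idt C Y) (tens C (idt C X) (eps C X))))
     = idt C (otim C Y (otim C Y X))"
    using whiskl[of "tens C (eta C X) (idt C X)" "tens C (idt C X) (eps C X)" "otim C Y Y"] snake2[of X] by simp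
  have se: "seq C (tens C (eta C Y) (idt C X)) (tens C (idt C Y) (tens C (idt C Y) c)) = seq C c (tens C (eta C Y) (idt C Y))"
    using slide[of "eta C Y" c] c cX by simp
  have "conv2 C d = seq C (tens C (eta C Y) (idt C X))
    (seq C (tens C (idt C Y) (tens C (idt C Y) (tens C (eta C X) (idt C X))))
    (seq C (tens C (idt C Y) (tens C (idt C Y) (tens C c (tens C (idt C X) (idt C X)))))
    (seq C (tens C (idt C Y) (tens C (idt C Y) (tens C (idt C Y) (eps C X)))) (tens C (idt C Y) (eps C Y)))))"
    unfolding s0 sb ..
  also have "\<dots> = seq C (tens C (eta C Y) (idt C X))
    (seq C (tens C (idt C Y) (tens C (idt C Y) (tens C (eta C X) (idt C X))))
    (seq C (tens C (idt C Y) (tens C (idt C Y) (tens C (idt C X) (eps C X)))) (seq C (tens C (idt C Y) (tens C (idt C Y) c)) (tens C (idt C Y) (eps C Y)))))"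
    using seq_re[OF sc] c cX by simp
  also have "\<dots> = seq C (tens C (eta C Y) (idt C X))
     (seq C (tens C (idt C Y) (tens C (idt C Y) c)) (tens C (idt C Y) (eps C Y)))"
    using seq_re_id[OF sd] c cX by simp
  also have "\<dots> = seq C c (seq C (tens C (eta C Y) (idt C Y)) (tens C (idt C Y) (eps C Y)))"
    using seq_re[OF se] c cX by simp
  also have "\<dots> = c" using snake2[of Y] c cX by simp
  finally show ?thesis unfolding d_def .
qed


lemma conv_conv2: assumes g: "arr C g" shows "conv C (conv2 C g) = g"
proof -
  define A where "A = dom C g"
  define B where "B = cod C g"
  define e where "e = conv2 C g"
  have gA: "dom C g = A" "cod C g = B" unfolding A_def B_def by auto
  have e: "arr C e" "dom C e = B" "cod C e = A" using conv2_arr[OF g] unfolding e_def A_def B_def by auto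
  have ee: "e = seq C (tens C (eta C A) (idt C B))
     (seq C (tens C (idt C A) (tens C g (idt C B))) (tens C (idt C A) (eps C B)))"
    unfolding e_def conv2_def gA ..
  have s0: "conv C e = seq C (tens C (idt C A) (eta C B))
    (seq C (tens C (idt C A) (tens C (eta C A) (tens C (idt C B) (idt C B))))
    (seq C (tens C (idt C A) (tens C (idt C A) (tens C g (tens C (idt C B) (idt C B)))))
    (seq C (tens C (idt C A) (tens C (idt C A) (tens C (eps C B) (idt C B))))
      (tens C (eps C A) (idt C B)))))"
    unfolding conv_alt[OF e(1)] e unfolding ee using g gA by (simp add: whiskl[symmetric] whiskr[symmetric])
  have s1: "seq C (tens C (idt C A) (eta C B)) (tens C (idt C A) (tens C (eta C A) (tens C (idt C B) (idt C B))))
     = seq C (tens C (idt C A) (eta C A)) (tens C (idt C A) (tens C (idt C A) (tens C (idt C A) (eta C B))))"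
  proof -
    have "seq C (eta C B) (tens C (eta C A) (tens C (idt C B) (idt C B))) = seq C (eta C A) (tens C (idt C A) (tens C (idt C A) (eta C B)))"
      using slide[of "eta C A" "eta C B"] by simp
    then show ?thesis by (simp add: whiskl)
  qed
  have s2: "seq C (tens C (idt C A) (tens C (idt C A) (tens C (idt C A) (eta C B)))) (tens C (idt C A) (tens C (idt C A) (tens C g (tens C (idt C B) (idt C B)))))
     = seq C (tens C (idt C A) (tens C (idt C A) g)) (tens C (idt C A) (tens C (idt C A) (tens C (idt C B) (eta C B))))"
  proof -
    have "seq C (tens C (idt C A) (eta C B)) (tens C g (tens C (idt C B) (idt C B))) = seq C g (tens C (idt C B) (eta C B))"
      using slide[of g "eta C B"] g gA by simp
    then show ?thesis using whiskl[of "tens C (idt C A) (eta C B)" "tens C g (tens C (idt C B) (idt C B))" "otim C A A"]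
      whiskl[of g "tens C (idt C B) (eta C B)" "otim C A A"] g gA by simp
  qed
  have s3: "seq C (tens C (idt C A) (tens C (idt C A) (tens C (idt C B) (eta C B)))) (tens C (idt C A) (tens C (idt C A) (tens C (eps C B) (idt C B))))
     = idt C (otim C A (otim C A B))"
    using whiskl[of "tens C (idt C B) (eta C B)" "tens C (eps C B) (idt C B)" "otim C A A"] snake1[of B] by simp
  have s4: "seq C (tens C (idt C A) (tens C (idt C A) g)) (tens C (eps C A) (idt C B)) = seq C (tens C (eps C A) (idt C A)) g"
    using slide[of "eps C A" g] g gA by simp
  have "conv C e = seq C (tens C (idt C A) (eta C A))
    (seq C (tens C (idt C A) (tens C (idt C A) (tens C (idt C A) (eta C B))))
    (seq C (tens C (idt C A) (tens C (idt C A) (tens C g (tens C (idt C B) (idt C B)))))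
    (seq C (tens C (idt C A) (tens C (idt C A) (tens C (eps C B) (idt C B))))
      (tens C (eps C A) (idt C B)))))"
    unfolding s0 using seq_re[OF s1] g gA by simp
  also have "\<dots> = seq C (tens C (idt C A) (eta C A))
    (seq C (tens C (idt C A) (tens C (idt C A) g)) (seq C (tens C (idt C A) (tens C (idt C A) (tens C (idt C B) (eta C B))))
    (seq C (tens C (idt C A) (tens C (idt C A) (tens C (eps C B) (idt C B))))
      (tens C (eps C A) (idt C B)))))"
    using seq_re[OF s2] g gA by simp
  also have "\<dots> = seq C (tens C (idt C A) (eta C A))
    (seq C (tens C (idt C A) (tens C (idt C A) g)) (tens C (eps C A) (idt C B)))"
    using seq_re_id[OF s3] g gA by simp
  also have "\<dots> = seq C (tens C (idt C A) (eta C A)) (seq C (tens C (eps C A) (idt C A)) g)"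
    unfolding s4 ..
  also have "\<dots> = g" by (rule seq_re_id[OF snake1[of A]]) (simp_all add: g gA)
  finally show ?thesis unfolding e_def .
qed


lemma le_props: "le C f g \<Longrightarrow> arr C f \<and> arr C g \<and> dom C f = dom C g \<and> cod C f = cod C g"
  using pe unfolding poset_enriched_def by blast
lemma le_refl: "arr C f \<Longrightarrow> le C f f" using pe unfolding poset_enriched_def by blast
lemma le_antisym: "le C f g \<Longrightarrow> le C g f \<Longrightarrow> f = g" using pe unfolding poset_enriched_def by blast
lemma le_trans: "le C f g \<Longrightarrow> le C g h \<Longrightarrow> le C f h" using pe unfolding poset_enriched_def by blast
lemma le_seq: "le C f f' \<Longrightarrow> le C g g' \<Longrightarrow> cod C f = dom C g \<Longrightarrow> le C (seq C f g) (seq C f' g')"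
  using pe unfolding poset_enriched_def by blast
lemma le_tens: "le C f f' \<Longrightarrow> le C g g' \<Longrightarrow> le C (tens C f g) (tens C f' g')"
  using pe unfolding poset_enriched_def by blast

lemma conv_mono: assumes "le C f g" shows "le C (conv C f) (conv C g)"
proof -
  from le_props[OF assms] have f: "arr C f" "arr C g" "dom C f = dom C g" "cod C f = cod C g" by auto
  show ?thesis unfolding conv_alt[OF f(1)] conv_alt[OF f(2)] f(3,4)[symmetric]
    by (rule le_seq le_tens le_refl assms | simp add: f)+
qed

lemma conv2_mono: assumes "le C f g" shows "le C (conv2 C f) (conv2 C g)"
proof -
  from le_props[OF assms] have f: "arr C f" "arr C g" "dom C f = dom C g" "cod C f = cod C g" by auto
  show ?thesis unfolding conv2_def f(3,4)[symmetric]
    by (rule le_seq le_tens le_refl assms | simp add: f)+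
qed


end

locale PB = CB + assumes bh: "boolean_homs C"
begin

lemma bot_hom: "bot C X Y \<in> hom C X Y" and top_hom: "top C X Y \<in> hom C X Y"
  using bh unfolding boolean_homs_def by blast+
lemma bot_le: "h \<in> hom C X Y \<Longrightarrow> le C (bot C X Y) h" and le_top: "h \<in> hom C X Y \<Longrightarrow> le C h (top C X Y)"
  using bh unfolding boolean_homs_def by blast+
lemma meet_hom: "f \<in> hom C X Y \<Longrightarrow> g \<in> hom C X Y \<Longrightarrow> meet C f g \<in> hom C X Y"
  and join_hom: "f \<in> hom C X Y \<Longrightarrow> g \<in> hom C X Y \<Longrightarrow> join C f g \<in> hom C X Y"
  and meet_le1: "f \<in> hom C X Y \<Longrightarrow> g \<in> hom C X Y \<Longrightarrow> le C (meet C f g) f"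
  and meet_le2: "f \<in> hom C X Y \<Longrightarrow> g \<in> hom C X Y \<Longrightarrow> le C (meet C f g) g"
  and join_le1: "f \<in> hom C X Y \<Longrightarrow> g \<in> hom C X Y \<Longrightarrow> le C f (join C f g)"
  and join_le2: "f \<in> hom C X Y \<Longrightarrow> g \<in> hom C X Y \<Longrightarrow> le C g (join C f g)"
  and meet_glb: "f \<in> hom C X Y \<Longrightarrow> g \<in> hom C X Y \<Longrightarrow> h \<in> hom C X Y \<Longrightarrow> le C h f \<Longrightarrow> le C h g \<Longrightarrow> le C h (meet C f g)"
  and join_lub: "f \<in> hom C X Y \<Longrightarrow> g \<in> hom C X Y \<Longrightarrow> h \<in> hom C X Y \<Longrightarrow> le C f h \<Longrightarrow> le C g h \<Longrightarrow> le C (join C f g) h"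
  and distr: "f \<in> hom C X Y \<Longrightarrow> g \<in> hom C X Y \<Longrightarrow> h \<in> hom C X Y \<Longrightarrow> meet C f (join C g h) = join C (meet C f g) (meet C f h)"
  using bh unfolding boolean_homs_def by blast+
lemma neg_hom: "f \<in> hom C X Y \<Longrightarrow> neg C f \<in> hom C X Y"
  and meet_neg: "f \<in> hom C X Y \<Longrightarrow> meet C f (neg C f) = bot C X Y"
  and join_neg: "f \<in> hom C X Y \<Longrightarrow> join C f (neg C f) = top C X Y"
  using bh unfolding boolean_homs_def by blast+

lemma hom_arr: "f \<in> hom C X Y \<Longrightarrow> arr C f" unfolding hom_def by auto
lemma meet_comm: "f \<in> hom C X Y \<Longrightarrow> g \<in> hom C X Y \<Longrightarrow> meet C f g = meet C g f"
  by (meson le_antisym meet_glb meet_hom meet_le1 meet_le2)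
lemma meet_top: "b \<in> hom C X Y \<Longrightarrow> meet C b (top C X Y) = b"
  by (meson hom_arr le_antisym le_refl le_top meet_glb meet_le1 top_hom)
lemma join_bot: "b \<in> hom C X Y \<Longrightarrow> join C (bot C X Y) b = b"
  by (meson bot_hom bot_le hom_arr join_le2 join_lub le_antisym le_refl)

lemma compl_unique: assumes a: "a \<in> hom C X Y" and b: "b \<in> hom C X Y"
  and m: "meet C a b = bot C X Y" and j: "join C a b = top C X Y"
  shows "b = neg C a"
proof -
  have n: "neg C a \<in> hom C X Y" using neg_hom[OF a] .
  have "b = meet C b (join C a (neg C a))" using meet_top[OF b] join_neg[OF a] by simp
  also have "\<dots> = join C (meet C b a) (meet C b (neg C a))" using distr[OF b a n] .
  also have "\<dots> = meet C b (neg C a)" using meet_comm[OF a b] m join_bot[OF meet_hom[OF b n]] by simp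
  finally have 1: "b = meet C b (neg C a)" .
  have "neg C a = meet C (neg C a) (join C a b)" using meet_top[OF n] j by simp
  also have "\<dots> = join C (meet C (neg C a) a) (meet C (neg C a) b)" using distr[OF n a b] .
  also have "\<dots> = meet C (neg C a) b" using meet_comm[OF a n] meet_neg[OF a] join_bot[OF meet_hom[OF n b]] by simp
  finally have 2: "neg C a = meet C (neg C a) b" .
  show ?thesis using 1 2 meet_comm[OF b n] by simp
qed

lemma conv_hom: "f \<in> hom C X Y \<Longrightarrow> conv C f \<in> hom C Y X"
  using conv_arr unfolding hom_def by auto
lemma conv2_hom: "f \<in> hom C X Y \<Longrightarrow> conv2 C f \<in> hom C Y X"
  using conv2_arr unfolding hom_def by auto

lemma conv_meet: assumes f: "f \<in> hom C X Y" and g: "g \<in> hom C X Y"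
  shows "conv C (meet C f g) = meet C (conv C f) (conv C g)"
proof (rule le_antisym)
  show "le C (conv C (meet C f g)) (meet C (conv C f) (conv C g))"
    by (meson conv_hom conv_mono f g meet_glb meet_hom meet_le1 meet_le2)
  define m where "m = meet C (conv C f) (conv C g)"
  have mh: "m \<in> hom C Y X" unfolding m_def by (simp add: conv_hom f g meet_hom)
  have "le C (conv2 C m) f" using conv2_mono[OF meet_le1[OF conv_hom[OF f] conv_hom[OF g]]]
    conv2_conv[OF hom_arr[OF f]] unfolding m_def by simp
  moreover have "le C (conv2 C m) g" using conv2_mono[OF meet_le2[OF conv_hom[OF f] conv_hom[OF g]]]
    conv2_conv[OF hom_arr[OF g]] unfolding m_def by simp
  ultimately have "le C (conv2 C m) (meet C f g)" using meet_glb[OF f g conv2_hom[OF mh]] by simp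
  from conv_mono[OF this] show "le C m (conv C (meet C f g))" using conv_conv2[OF hom_arr[OF mh]] by simp
qed

lemma conv_join: assumes f: "f \<in> hom C X Y" and g: "g \<in> hom C X Y"
  shows "conv C (join C f g) = join C (conv C f) (conv C g)"
proof (rule le_antisym[symmetric])
  show "le C (join C (conv C f) (conv C g)) (conv C (join C f g))"
    by (meson conv_hom conv_mono f g join_lub join_hom join_le1 join_le2)
  define m where "m = join C (conv C f) (conv C g)"
  have mh: "m \<in> hom C Y X" unfolding m_def by (simp add: conv_hom f g join_hom)
  have "le C f (conv2 C m)" using conv2_mono[OF join_le1[OF conv_hom[OF f] conv_hom[OF g]]]
    conv2_conv[OF hom_arr[OF f]] unfolding m_def by simp
  moreover have "le C g (conv2 C m)" using conv2_mono[OF join_le2[OF conv_hom[OF f] conv_hom[OF g]]]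
    conv2_conv[OF hom_arr[OF g]] unfolding m_def by simp
  ultimately have "le C (join C f g) (conv2 C m)" using join_lub[OF f g conv2_hom[OF mh]] by simp
  from conv_mono[OF this] show "le C (conv C (join C f g)) m" using conv_conv2[OF hom_arr[OF mh]] by simp
qed

lemma conv_bot: "conv C (bot C X Y) = bot C Y X"
proof (rule le_antisym)
  have "le C (bot C X Y) (conv2 C (bot C Y X))" by (simp add: bot_hom bot_le conv2_hom)
  from conv_mono[OF this] show "le C (conv C (bot C X Y)) (bot C Y X)"
    using conv_conv2[OF hom_arr[OF bot_hom]] by simp
  show "le C (bot C Y X) (conv C (bot C X Y))" by (simp add: bot_hom bot_le conv_hom)
qed

lemma conv_top: "conv C (top C X Y) = top C Y X"
proof (rule le_antisym)
  have "le C (conv2 C (top C Y X)) (top C X Y)" by (simp add: top_hom le_top conv2_hom)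
  from conv_mono[OF this] show "le C (top C Y X) (conv C (top C X Y))"
    using conv_conv2[OF hom_arr[OF top_hom]] by simp
  show "le C (conv C (top C X Y)) (top C Y X)" by (simp add: top_hom le_top conv_hom)
qed

lemma conv_neg: assumes c: "c \<in> hom C X Y" shows "conv C (neg C c) = neg C (conv C c)"
proof (rule compl_unique)
  show "conv C c \<in> hom C Y X" "conv C (neg C c) \<in> hom C Y X" using c by (simp_all add: conv_hom neg_hom)
  show "meet C (conv C c) (conv C (neg C c)) = bot C Y X"
    using conv_meet[OF c neg_hom[OF c]] meet_neg[OF c] conv_bot by simp
  show "join C (conv C c) (conv C (neg C c)) = top C Y X"
    using conv_join[OF c neg_hom[OF c]] join_neg[OF c] conv_top by simp
qed

end

theorem lemma56:
  fixes C :: "('o, 'a) pbicat"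
  assumes "peircean_bicategory C"
    and "arr C c"
  shows "conv C (neg C c) = neg C (conv C c)"
proof -
  interpret PB C using assms(1) unfolding peircean_bicategory_def PB_def CB_def PB_axioms_def by blast
  show ?thesis using conv_neg[of c "dom C c" "cod C c"] assms(2) unfolding hom_def by simp
qed

end
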